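(* The function $A:[0,1)\to\mathbb{R}$, $A(x):=\sum_{k=0}^\infty(-1)^k\frac{4k+2}{(2k+1)^2-x}$, is increasing, $A(0)=\pi/2$, and for all $x\in[0,1)$ \[ -\frac12\le A(x)-\frac{2}{1-x}\le\frac{\pi-4}{2}<-0.42. \] In particular, $A$ extends to a homeomorphism between $[0,1]$ and $[\pi/2,+\infty]\subset\overline{\mathbb{R}}$.
   Context: $\overline{\mathbb{R}}=\mathbb{R}\cup\{+\infty,-\infty\}$ is the two-point compactification of $\mathbb{R}$ with its usual topology. *)

theory Defs
  imports "HOL-Analysis.Analysis" "HOL-Library.Extended_Real"
begin

definition A_term :: "real \<Rightarrow> nat \<Rightarrow> real" where
  "A_term x k = (-1) ^ k * (4 * real k + 2) / ((2 * real k + 1)^2 - x)"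

definition A :: "real \<Rightarrow> real" where
  "A x = (\<Sum>k. A_term x k)"

end

theory Submission
  imports Defs "HOL-Real_Asymp.Real_Asymp"
begin

definition cc :: "real \<Rightarrow> real \<Rightarrow> real \<Rightarrow> real \<Rightarrow> nat \<Rightarrow> real" where
  "cc r a b d k = d * (2 * (2 * real k + r)) / (((2 * real k + r)^2 - a) * ((2 * real k + r)^2 - b))"

lemma cc_lim: "cc r a b d \<longlonglongrightarrow> 0"
  unfolding cc_def by real_asymp

lemma step_ineq:
  fixes n a b :: real
  assumes "1 \<le> n" "0 \<le> a" "0 \<le> b" "a < n^2" "b < n^2"
  shows "(n+2) / (((n+2)^2 - a) * ((n+2)^2 - b)) \<le> n / ((n^2 - a) * (n^2 - b))"
proof -
  have h1: "(n+2) * (n^2 - a) \<le> n * ((n+2)^2 - a)"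
    using assms by (simp add: algebra_simps power2_eq_square)
  have h2: "n^2 - b \<le> (n+2)^2 - b" using assms by (simp add: power2_eq_square algebra_simps)
  have p1: "0 < n^2 - a" "0 < n^2 - b" using assms by auto
  have p2: "0 < (n+2)^2 - a" "0 < (n+2)^2 - b" using assms by (auto simp: power2_eq_square algebra_simps)
  have "(n+2) * ((n^2 - a) * (n^2 - b)) \<le> n * ((n+2)^2 - a) * ((n+2)^2 - b)"
  proof -
    have "(n+2) * ((n^2 - a) * (n^2 - b)) = ((n+2) * (n^2 - a)) * (n^2 - b)" by simp
    also have "\<dots> \<le> (n * ((n+2)^2 - a)) * ((n+2)^2 - b)"
      using h1 h2 p1 p2 assms by (rule_tac mult_mono) (auto intro!: mult_nonneg_nonneg less_imp_le)
    finally show ?thesis by simp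
  qed
  then show ?thesis using p1 p2 by (simp add: divide_simps mult.assoc)
qed

lemma cc_props:
  assumes "1 \<le> r" "0 \<le> a" "0 \<le> b" "a < r^2" "b < r^2" "0 \<le> d"
  shows "0 \<le> cc r a b d k" "cc r a b d (Suc k) \<le> cc r a b d k"
proof -
  define n where "n = 2 * real k + r"
  have n1: "1 \<le> n" "r \<le> n" using assms by (auto simp: n_def)
  have "r^2 \<le> n^2" using n1 assms by (intro power_mono) auto
  hence na: "a < n^2" "b < n^2" using assms by auto
  have e0: "cc r a b d k = 2 * d * (n / ((n^2 - a) * (n^2 - b)))"
    by (simp add: cc_def n_def)
  have e1: "cc r a b d (Suc k) = 2 * d * ((n+2) / (((n+2)^2 - a) * ((n+2)^2 - b)))"
    by (simp add: cc_def n_def algebra_simps)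
  show "0 \<le> cc r a b d k" unfolding e0 using na n1 assms by simp
  show "cc r a b d (Suc k) \<le> cc r a b d k" unfolding e0 e1
    using step_ineq[OF n1(1) assms(2,3) na] assms by (intro mult_left_mono) auto
qed

lemma alt:
  assumes "1 \<le> r" "0 \<le> a" "0 \<le> b" "a < r^2" "b < r^2" "0 \<le> d"
  shows "summable (\<lambda>k. (-1)^k * cc r a b d k)"
    "cc r a b d 0 - cc r a b d 1 \<le> (\<Sum>k. (-1)^k * cc r a b d k)"
    "(\<Sum>k. (-1)^k * cc r a b d k) \<le> cc r a b d 0"
    "0 \<le> (\<Sum>k. (-1)^k * cc r a b d k)"
proof -
  note L = summable_Leibniz'[of "cc r a b d", OF cc_lim cc_props(1)[OF assms] cc_props(2)[OF assms]]
  show "summable (\<lambda>k. (-1)^k * cc r a b d k)" by (rule L(1))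
  have "(\<Sum>i<2*1. (-1)^i * cc r a b d i) \<le> (\<Sum>k. (-1)^k * cc r a b d k)" by (rule L(2))
  thus *: "cc r a b d 0 - cc r a b d 1 \<le> (\<Sum>k. (-1)^k * cc r a b d k)"
    by (simp add: numeral_2_eq_2)
  have "(\<Sum>k. (-1)^k * cc r a b d k) \<le> (\<Sum>i<2*0+1. (-1)^i * cc r a b d i)" by (rule L(4))
  thus "(\<Sum>k. (-1)^k * cc r a b d k) \<le> cc r a b d 0" by simp
  show "0 \<le> (\<Sum>k. (-1)^k * cc r a b d k)"
    using * cc_props(2)[OF assms, of 0] by simp
qed

lemma A_term_eq: "A_term x k = (-1)^k * (2 * (2 * real k + 1) / ((2 * real k + 1)^2 - x))"
  by (simp add: A_term_def)

lemma A_term_diff: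
  assumes "x < 1" "y < 1"
  shows "A_term x k - A_term y k = (-1)^k * cc 1 x y (x - y) k"
proof -
  define n where "n = 2 * real k + 1"
  have "1 \<le> n" by (simp add: n_def)
  hence "1 \<le> n^2" by (metis one_le_power)
  hence p: "n^2 - x \<noteq> 0" "n^2 - y \<noteq> 0" using assms by auto
  have "A_term x k - A_term y k = (-1)^k * (2 * n / (n^2 - x) - 2 * n / (n^2 - y))"
    by (simp add: A_term_def n_def algebra_simps diff_divide_distrib)
  also have "2 * n / (n^2 - x) - 2 * n / (n^2 - y) = (x - y) * (2 * n) / ((n^2 - x) * (n^2 - y))"
    using p by (simp add: field_simps)
  finally show ?thesis by (simp add: cc_def n_def)
qed

lemma A_term_diff3:
  assumes "x < 9" "y < 9"
  shows "A_term x (Suc k) - A_term y (Suc k) = (-1)^k * cc 3 x y (y - x) k"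
proof -
  define n where "n = 2 * real k + 3"
  have "3 \<le> n" by (simp add: n_def)
  hence "3^2 \<le> n^2" by (intro power_mono) auto
  hence p: "n^2 - x \<noteq> 0" "n^2 - y \<noteq> 0" using assms by auto
  have "A_term x (Suc k) - A_term y (Suc k) = (-1)^(Suc k) * (2 * n / (n^2 - x) - 2 * n / (n^2 - y))"
    by (simp add: A_term_def n_def algebra_simps diff_divide_distrib)
  also have "\<dots> = (-1)^k * ((y - x) * (2 * n) / ((n^2 - x) * (n^2 - y)))"
    using p by (simp add: field_simps)
  finally show ?thesis by (simp add: cc_def n_def)
qed


lemma aux2: "(t::real) \<noteq> 0 \<Longrightarrow> 2 * t / (t * t) = 2 / t" by simp

lemma A0: "summable (A_term 0)" "A 0 = pi / 2"
proof -
  let ?a = "\<lambda>k::nat. 1 / real (k * 2 + 1)"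
  have lim: "?a \<longlonglongrightarrow> 0" by real_asymp
  have sa: "summable (\<lambda>k. (-1)^k * ?a k)"
    by (rule summable_Leibniz'(1)[OF lim]) (auto simp: frac_le)
  have eq: "A_term 0 = (\<lambda>k. 2 * ((-1)^k * ?a k))"
  proof (rule ext)
    fix k :: nat
    have nz: "2 * real k + 1 \<noteq> 0" by (metis add_pos_nonneg less_numeral_extra(1) mult_nonneg_nonneg of_nat_0_le_iff zero_le_numeral add.commute less_irrefl)
    have "A_term 0 k = (-1)^k * (2 * (2 * real k + 1) / ((2 * real k + 1) * (2 * real k + 1)))"
      by (simp add: A_term_eq power2_eq_square)
    also have "2 * (2 * real k + 1) / ((2 * real k + 1) * (2 * real k + 1)) = 2 / (2 * real k + 1)"
      using aux2[OF nz] .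
    finally show "A_term 0 k = 2 * ((-1)^k * ?a k)" by (simp add: algebra_simps)
  qed
  show "summable (A_term 0)" unfolding eq using sa by (rule summable_mult)
  have "A 0 = 2 * (\<Sum>k. (-1)^k * ?a k)" unfolding A_def eq using sa by (rule suminf_mult)
  also have "(\<Sum>k. (-1)^k * ?a k) = pi / 4" using pi_series by simp
  finally show "A 0 = pi / 2" by simp
qed

lemma A_summable: assumes "0 \<le> x" "x < 1" shows "summable (A_term x)"
proof -
  have "A_term x = (\<lambda>k. A_term 0 k + (-1)^k * cc 1 x 0 (x - 0) k)"
    using A_term_diff[of x 0] assms by (auto simp: algebra_simps)
  moreover have "summable (\<lambda>k. (-1)^k * cc 1 x 0 (x - 0) k)"
    using assms by (intro alt(1)) auto
  ultimately show ?thesis using A0(1) by (simp add: summable_add)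
qed

lemma A_diff:
  assumes "0 \<le> y" "y \<le> x" "x < 1"
  shows "A x - A y = (\<Sum>k. (-1)^k * cc 1 x y (x - y) k)"
proof -
  have "A x - A y = (\<Sum>k. A_term x k - A_term y k)"
    unfolding A_def using assms by (intro suminf_diff A_summable) auto
  also have "\<dots> = (\<Sum>k. (-1)^k * cc 1 x y (x - y) k)"
    using A_term_diff[of x y] assms by simp
  finally show ?thesis .
qed

lemma A_diff_bounds:
  assumes "0 \<le> y" "y \<le> x" "x < 1"
  shows "0 \<le> A x - A y" "A x - A y \<le> 2 * (x - y) / ((1 - x) * (1 - y))"
    "y < x \<Longrightarrow> 0 < A x - A y"
proof -
  have as: "1 \<le> (1::real)" "0 \<le> x" "0 \<le> y" "x < 1^2" "y < 1^2" "0 \<le> x - y" using assms by auto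
  note L = alt[OF as] A_diff[OF assms]
  show "0 \<le> A x - A y" using L by simp
  have e0: "cc 1 x y (x - y) 0 = 2 * (x - y) / ((1 - x) * (1 - y))" by (simp add: cc_def)
  show "A x - A y \<le> 2 * (x - y) / ((1 - x) * (1 - y))" using L(3,5) e0 by simp
  assume "y < x"
  have p: "0 < (1 - x) * (1 - y)" "(1 - x) * (1 - y) \<le> 1" using assms
    by (auto intro: mult_le_one)
  have c0: "2 * (x - y) \<le> cc 1 x y (x - y) 0"
    unfolding e0 using divide_left_mono[of "(1 - x) * (1 - y)" 1 "2 * (x - y)"] p \<open>y < x\<close> by simp
  have q: "64 \<le> (9 - x) * (9 - y)" using assms
    using mult_mono[of 8 "9 - x" 8 "9 - y"] by simp
  have c1: "cc 1 x y (x - y) 1 \<le> 6 * (x - y) / 64"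
  proof -
    have e1: "cc 1 x y (x - y) 1 = 6 * (x - y) / ((9 - x) * (9 - y))"
      by (simp add: cc_def algebra_simps)
    show ?thesis unfolding e1
      by (rule divide_left_mono) (use q \<open>y < x\<close> in auto)
  qed
  show "0 < A x - A y" using L(2) L(5) c0 c1 \<open>y < x\<close> by simp
qed


lemma D1: "(\<lambda>k. A_term 1 (Suc k)) sums (-1/2)"
proof -
  define f where "f k = (-1)^(Suc k) / (2 * real k + 2)" for k
  have "(\<lambda>k. norm (f k)) \<longlonglongrightarrow> 0"
  proof -
    have "(\<lambda>k. norm (f k)) = (\<lambda>k. 1 / (2 * real k + 2))"
      by (rule ext) (simp add: f_def norm_divide)
    moreover have "(\<lambda>k::nat. 1 / (2 * real k + 2)) \<longlonglongrightarrow> 0" by real_asymp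
    ultimately show ?thesis by simp
  qed
  hence "f \<longlonglongrightarrow> 0" by (rule tendsto_norm_zero_cancel)
  from sums_minus[OF telescope_sums[OF this]]
  have "(\<lambda>k. - (f (Suc k) - f k)) sums (- (0 - f 0))" .
  moreover have "(\<lambda>k. - (f (Suc k) - f k)) = (\<lambda>k. A_term 1 (Suc k))"
  proof (rule ext)
    fix k
    define m where "m = real k"
    have m0: "0 \<le> m" by (simp add: m_def)
    have d1: "(2 * m + 3)^2 - 1 = (2 * m + 2) * (2 * m + 4)" by (simp add: algebra_simps power2_eq_square)
    have nz: "2 * m + 2 \<noteq> 0" "2 * m + 4 \<noteq> 0" using m0 by auto
    have "A_term 1 (Suc k) = (-1)^(Suc k) * ((4 * m + 6) / ((2 * m + 3)^2 - 1))"
      by (simp add: A_term_def m_def algebra_simps)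
    also have "(4 * m + 6) / ((2 * m + 3)^2 - 1) = 1 / (2 * m + 2) + 1 / (2 * m + 4)"
      unfolding d1 using nz by (simp add: field_simps)
    also have "(-1)^(Suc k) * (1 / (2 * m + 2) + 1 / (2 * m + 4)) = - (f (Suc k) - f k)"
      by (simp add: f_def m_def algebra_simps)
    finally show "- (f (Suc k) - f k) = A_term 1 (Suc k)" ..
  qed
  moreover have "- (0 - f 0) = -1/2" by (simp add: f_def)
  ultimately show ?thesis by simp
qed

lemma D_bounds:
  assumes "0 \<le> x" "x < 1"
  shows "A x - 2 / (1 - x) = (\<Sum>k. A_term x (Suc k))"
    "(\<Sum>k. A_term x (Suc k)) \<le> (pi - 4) / 2"
    "-1/2 \<le> (\<Sum>k. A_term x (Suc k))"
proof -
  have sx: "summable (\<lambda>k. A_term x (Suc k))" using A_summable[OF assms] summable_Suc_iff by blast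
  have s0: "summable (\<lambda>k. A_term 0 (Suc k))" using A0(1) summable_Suc_iff by blast
  have s1: "summable (\<lambda>k. A_term 1 (Suc k))" using D1 sums_summable by blast
  have h: "A_term y 0 = 2 / (1 - y)" for y by (simp add: A_term_def)
  show e: "A x - 2 / (1 - x) = (\<Sum>k. A_term x (Suc k))"
    using suminf_split_head[OF A_summable[OF assms]] h unfolding A_def by simp
  have e0: "(\<Sum>k. A_term 0 (Suc k)) = (pi - 4) / 2"
    using suminf_split_head[OF A0(1)] h[of 0] A0(2) unfolding A_def by simp
  have "(\<Sum>k. A_term 0 (Suc k)) - (\<Sum>k. A_term x (Suc k)) = (\<Sum>k. A_term 0 (Suc k) - A_term x (Suc k))"
    by (rule suminf_diff[OF s0 sx])
  also have "\<dots> = (\<Sum>k. (-1)^k * cc 3 0 x (x - 0) k)"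
    using A_term_diff3[of 0 x] assms by simp
  also have "0 \<le> \<dots>" using assms by (intro alt(4)) auto
  finally show "(\<Sum>k. A_term x (Suc k)) \<le> (pi - 4) / 2" using e0 by simp
  have "(\<Sum>k. A_term x (Suc k)) - (\<Sum>k. A_term 1 (Suc k)) = (\<Sum>k. A_term x (Suc k) - A_term 1 (Suc k))"
    by (rule suminf_diff[OF sx s1])
  also have "\<dots> = (\<Sum>k. (-1)^k * cc 3 x 1 (1 - x) k)"
    using A_term_diff3[of x 1] assms by simp
  also have "0 \<le> \<dots>" using assms by (intro alt(4)) auto
  finally show "-1/2 \<le> (\<Sum>k. A_term x (Suc k))" using sums_unique[OF D1] by simp
qed


lemma A_lip_aux:
  assumes "0 \<le> y" "y \<le> x" "x \<le> b" "b < 1"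
  shows "dist (A x) (A y) \<le> 2 / (1 - b)^2 * dist x y"
proof -
  have x1: "x < 1" using assms by simp
  note B = A_diff_bounds[OF assms(1,2) x1]
  have pb: "(1 - b)^2 \<le> (1 - x) * (1 - y)" unfolding power2_eq_square
    using assms by (intro mult_mono) auto
  have pos: "0 < (1 - b)^2" using assms by simp
  have "2 * (x - y) / ((1 - x) * (1 - y)) \<le> 2 * (x - y) / (1 - b)^2"
    by (rule divide_left_mono) (use pb pos assms in auto)
  hence "A x - A y \<le> 2 / (1 - b)^2 * (x - y)" using B(2) by simp
  thus ?thesis using B(1) assms by (simp add: dist_real_def)
qed

lemma A_cont: assumes "b < 1" shows "continuous_on {0..b} A"
proof (rule lipschitz_on_continuous_on)
  show "(2 / (1 - b)^2)-lipschitz_on {0..b} A"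
  proof (rule lipschitz_onI)
    fix x y assume xy: "x \<in> {0..b}" "y \<in> {0..b}"
    show "dist (A x) (A y) \<le> 2 / (1 - b)^2 * dist x y"
    proof (cases "y \<le> x")
      case True thus ?thesis using xy assms A_lip_aux[of y x b] by auto
    next
      case False thus ?thesis using xy assms A_lip_aux[of x y b] by (auto simp: dist_commute)
    qed
  qed simp
qed

lemma pi_bound: "(pi - 4) / 2 < -0.42"
  using pi_approx by simp


lemma A_strict: "x \<in> {0..<1} \<Longrightarrow> y \<in> {0..<1} \<Longrightarrow> y < x \<Longrightarrow> A y < A x"
  using A_diff_bounds(3)[of y x] by auto

lemma A_ge: "x \<in> {0..<1} \<Longrightarrow> pi / 2 \<le> A x"
  using A_diff_bounds(1)[of 0 x] A0(2) by auto

lemma A_lower: "x \<in> {0..<1} \<Longrightarrow> 2 / (1 - x) - 1/2 \<le> A x"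
  using D_bounds[of x] by auto

lemma homeo:
  "\<exists>B :: real \<Rightarrow> ereal. (\<forall>x\<in>{0..<1}. B x = ereal (A x))
          \<and> (\<exists>g. homeomorphism {0..1} {ereal (pi / 2)..\<infinity>} B g)"
proof -
  define B where "B x = (if x < 1 then ereal (A x) else \<infinity>)" for x
  have pi32: "3 < pi" using pi_approx by simp
  have cont: "continuous_on {0..1} B"
    unfolding continuous_on_def
  proof
    fix x assume x: "x \<in> {0..(1::real)}"
    show "(B \<longlongrightarrow> B x) (at x within {0..1})"
    proof (cases "x < 1")
      case True
      define b where "b = (x + 1) / 2"
      have b: "b < 1" "x \<in> {0..b}" using True x by (auto simp: b_def)
      have "(A \<longlongrightarrow> A x) (at x within {0..b})"
        using A_cont[OF b(1)] b(2) unfolding continuous_on_def by blast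
      moreover have "eventually (\<lambda>y. y \<in> {0..b} \<longleftrightarrow> y \<in> {0..1}) (at x)"
        unfolding eventually_at
        by (rule exI[of _ "(1 - x) / 2"]) (use True in \<open>auto simp: dist_real_def b_def abs_if split: if_splits\<close>)
      ultimately have "(A \<longlongrightarrow> A x) (at x within {0..1})"
        by (rule Lim_transform_within_set)
      hence "((\<lambda>y. ereal (A y)) \<longlongrightarrow> ereal (A x)) (at x within {0..1})" by (rule tendsto_ereal)
      moreover have "eventually (\<lambda>y. ereal (A y) = B y) (at x within {0..1})"
        unfolding eventually_at
        by (rule exI[of _ "1 - x"]) (use True in \<open>auto simp: dist_real_def B_def abs_if split: if_splits\<close>)
      ultimately have "(B \<longlongrightarrow> ereal (A x)) (at x within {0..1})"
        by (rule Lim_transform_eventually)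
      thus ?thesis using True by (simp add: B_def)
    next
      case False
      hence x1: "x = 1" using x by simp
      have "(B \<longlongrightarrow> \<infinity>) (at 1 within {0..1})"
        unfolding tendsto_PInfty
      proof
        fix r :: real
        show "eventually (\<lambda>y. ereal r < B y) (at 1 within {0..1})"
          unfolding eventually_at
        proof (rule exI[of _ "1 / (\<bar>r\<bar> + 1)"], safe)
          show "0 < 1 / (\<bar>r\<bar> + 1)" by (simp add: add_pos_nonneg)
        next
          fix y :: real assume y: "y \<in> {0..1}" "y \<noteq> 1" "dist y 1 < 1 / (\<bar>r\<bar> + 1)"
          have y1: "y < 1" using y by auto
          have "(1 - y) < 1 / (\<bar>r\<bar> + 1)" using y y1 by (simp add: dist_real_def)
          hence "(1 - y) * (\<bar>r\<bar> + 1) < 1" by (simp add: less_divide_eq add_pos_nonneg)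
          hence "2 * (\<bar>r\<bar> + 1) < 2 / (1 - y)" using y1 by (simp add: field_simps)
          moreover have "2 / (1 - y) - 1/2 \<le> A y" using A_lower y y1 by auto
          ultimately have "r < A y" by (cases "0 \<le> r") auto
          thus "ereal r < B y" using y1 by (simp add: B_def)
        qed
      qed
      thus ?thesis using x1 by (simp add: B_def)
    qed
  qed
  have img: "B ` {0..1} = {ereal (pi / 2)..\<infinity>}"
  proof
    show "B ` {0..1} \<subseteq> {ereal (pi / 2)..\<infinity>}"
      using A_ge by (auto simp: B_def)
  next
    show "{ereal (pi / 2)..\<infinity>} \<subseteq> B ` {0..1}"
    proof
      fix v assume v: "v \<in> {ereal (pi / 2)..\<infinity>}"
      show "v \<in> B ` {0..1}"
      proof (cases v)
        case (real w)
        hence w: "pi / 2 \<le> w" using v by auto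
        define b where "b = 1 - 2 / (w + 1/2)"
        have wp: "2 < w + 1/2" using w pi32 by simp
        have b: "0 \<le> b" "b < 1" using wp by (auto simp: b_def field_simps)
        have "2 / (1 - b) - 1/2 = w" using wp by (simp add: b_def field_simps)
        hence Ab: "w \<le> A b" using A_lower[of b] b by auto
        have "A 0 \<le> w" using A0(2) w by simp
        then obtain x where x: "0 \<le> x" "x \<le> b" "A x = w"
          using IVT'[of A 0 w b, OF _ Ab b(1) A_cont[OF b(2)]] by blast
        hence "B x = v" using b real by (simp add: B_def)
        thus ?thesis using x b by auto
      next
        case PInf
        have "B 1 = v" using PInf by (simp add: B_def)
        thus ?thesis by force
      next
        case MInf thus ?thesis using v by auto
      qed
    qed
  qed
  have inj: "inj_on B {0..1}"
  proof (rule inj_onI)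
    fix x y assume xy: "x \<in> {0..(1::real)}" "y \<in> {0..(1::real)}" "B x = B y"
    show "x = y"
    proof (cases "x < 1"; cases "y < 1")
      assume "x < 1" "y < 1"
      hence "A x = A y" using xy by (simp add: B_def)
      thus "x = y" using A_strict[of x y] A_strict[of y x] xy \<open>x < 1\<close> \<open>y < 1\<close>
        by (cases x y rule: linorder_cases) auto
    qed (use xy in \<open>auto simp: B_def\<close>)
  qed
  obtain g where "homeomorphism {0..1} {ereal (pi / 2)..\<infinity>} B g"
    using homeomorphism_compact[OF compact_Icc cont img inj] by blast
  moreover have "\<forall>x\<in>{0..<1}. B x = ereal (A x)" by (simp add: B_def)
  ultimately show ?thesis by blast
qed

theorem lemma5:
  shows "(\<forall>x\<in>{0..<1}. summable (A_term x))
    \<and> strict_mono_on {0..<1} A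
    \<and> A 0 = pi / 2
    \<and> (\<forall>x\<in>{0..<1}. -1/2 \<le> A x - 2 / (1 - x) \<and> A x - 2 / (1 - x) \<le> (pi - 4) / 2)
    \<and> (pi - 4) / 2 < -0.42
    \<and> (\<exists>B :: real \<Rightarrow> ereal. (\<forall>x\<in>{0..<1}. B x = ereal (A x))
          \<and> (\<exists>g. homeomorphism {0..1} {ereal (pi / 2)..\<infinity>} B g))"
proof (intro conjI)
  show "\<forall>x\<in>{0..<1}. summable (A_term x)" using A_summable by auto
  show "strict_mono_on {0..<1} A" by (rule strict_mono_onI) (use A_strict in blast)
  show "A 0 = pi / 2" by (rule A0(2))
  show "\<forall>x\<in>{0..<1}. -1/2 \<le> A x - 2 / (1 - x) \<and> A x - 2 / (1 - x) \<le> (pi - 4) / 2"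
    using D_bounds by auto
  show "(pi - 4) / 2 < -0.42" by (rule pi_bound)
  show "\<exists>B :: real \<Rightarrow> ereal. (\<forall>x\<in>{0..<1}. B x = ereal (A x))
          \<and> (\<exists>g. homeomorphism {0..1} {ereal (pi / 2)..\<infinity>} B g)" by (rule homeo)
qed

end
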